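(* Let $d\geqslant1$ and let $u_1,\dots,u_d\in\mathbb{Z}^d$ satisfy no nontrivial $\mathbb{Z}$-linear relation. No periodic subset of $\mathbb{Z}^d$ with periods $u_1,\dots,u_d$ has a minimal complement in $\mathbb{Z}^d$.
   Context: $\mathbb{N}=\{0,1,2,\dots\}$, $P=\mathbb{N}u_1+\dots+\mathbb{N}u_d$. A nonempty $X\subseteq\mathbb{Z}^d$ is periodic with periods $u_1,\dots,u_d$ if $X\subseteq F+P$ for some nonempty finite $F\subseteq\mathbb{Z}^d$ and $x+P\subseteq X$ for every $x\in X$. A nonempty $M\subseteq\mathbb{Z}^d$ is a complement of $W$ if $M+W=\mathbb{Z}^d$, and a minimal complement if no proper subset of $M$ is a complement of $W$. *)

theory Defs
  imports "HOL-Analysis.Analysis"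
begin

text \<open>Z^d is modelled as int ^ 'd for a finite index type 'd (d = CARD('d) \<ge> 1).
  The periods u_1,...,u_d are a family u :: 'd \<Rightarrow> int ^ 'd.\<close>

definition sumset :: "('a::plus) set \<Rightarrow> 'a set \<Rightarrow> 'a set" where
  "sumset A B = {a + b | a b. a \<in> A \<and> b \<in> B}"

definition period_cone :: "('d::finite \<Rightarrow> int ^ 'd) \<Rightarrow> (int ^ 'd) set" where
  "period_cone u = {(\<Sum>i\<in>UNIV. int (n i) *s u i) | n :: 'd \<Rightarrow> nat. True}"

definition periodic :: "('d::finite \<Rightarrow> int ^ 'd) \<Rightarrow> (int ^ 'd) set \<Rightarrow> bool" where
  "periodic u X \<longleftrightarrow> X \<noteq> {} \<and>
     (\<exists>F. finite F \<and> F \<noteq> {} \<and> X \<subseteq> sumset F (period_cone u)) \<and>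
     (\<forall>x\<in>X. sumset {x} (period_cone u) \<subseteq> X)"

definition is_complement :: "('a::plus) set \<Rightarrow> 'a set \<Rightarrow> bool" where
  "is_complement M W \<longleftrightarrow> M \<noteq> {} \<and> sumset M W = UNIV"

definition minimal_complement :: "('a::plus) set \<Rightarrow> 'a set \<Rightarrow> bool" where
  "minimal_complement M W \<longleftrightarrow> is_complement M W \<and> (\<forall>M'. M' \<subset> M \<longrightarrow> \<not> is_complement M' W)"

end

theory Submission
  imports Defs
begin

lemma cone_single:
  fixes u :: "'d::finite \<Rightarrow> int ^ 'd"
  shows "int N *s u i0 \<in> period_cone u"
proof -
  have "(\<Sum>i\<in>UNIV. int ((\<lambda>i. if i = i0 then N else 0) i) *s u i)
        = (\<Sum>i\<in>UNIV. if i = i0 then int N *s u i0 else 0)"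
    by (rule sum.cong) simp_all
  also have "\<dots> = int N *s u i0" by simp
  finally have eq: "int N *s u i0 = (\<Sum>i\<in>UNIV. int ((\<lambda>i. if i = i0 then N else 0) i) *s u i)" by simp
  show ?thesis unfolding period_cone_def mem_Collect_eq
    by (rule exI[of _ "\<lambda>i. if i = i0 then N else 0"]) (simp only: eq simp_thms)
qed

lemma fin_shift:
  fixes u :: "'d::finite \<Rightarrow> int ^ 'd"
  assumes indep: "\<And>c :: 'd \<Rightarrow> int. (\<Sum>i\<in>UNIV. c i *s u i) = 0 \<Longrightarrow> (\<forall>i. c i = 0)"
  shows "finite {N::nat. w - int N *s u i0 \<in> sumset {f} (period_cone u)}"
proof (cases "{N::nat. w - int N *s u i0 \<in> sumset {f} (period_cone u)} = {}")
  case True then show ?thesis by simp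
next
  case False
  then obtain N1 n where h1: "w - int N1 *s u i0 = f + (\<Sum>i\<in>UNIV. int (n i) *s u i)"
    unfolding sumset_def period_cone_def by blast
  have "{N::nat. w - int N *s u i0 \<in> sumset {f} (period_cone u)} \<subseteq> {..N1 + n i0}"
  proof
    fix N assume "N \<in> {N::nat. w - int N *s u i0 \<in> sumset {f} (period_cone u)}"
    then obtain n' where h2: "w - int N *s u i0 = f + (\<Sum>i\<in>UNIV. int (n' i) *s u i)"
      unfolding sumset_def period_cone_def by blast
    define c where "c = (\<lambda>i. int (n i) - int (n' i) - (if i = i0 then int N - int N1 else 0))"
    have "(\<Sum>i\<in>UNIV. c i *s u i) = 0"
    proof -
      have e: "(\<Sum>i\<in>UNIV. int (n i) *s u i) - (\<Sum>i\<in>UNIV. int (n' i) *s u i) = (int N - int N1) *s u i0"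
        using h1 h2 by (simp add: vec_eq_iff algebra_simps)
      have t: "c i *s u i = int (n i) *s u i - int (n' i) *s u i - (if i = i0 then (int N - int N1) *s u i0 else 0)" for i
        by (auto simp: c_def vec_eq_iff algebra_simps)
      have "(\<Sum>i\<in>UNIV. c i *s u i) = (\<Sum>i\<in>UNIV. int (n i) *s u i) - (\<Sum>i\<in>UNIV. int (n' i) *s u i)
          - (\<Sum>i\<in>UNIV. (if i = i0 then (int N - int N1) *s u i0 else 0))"
        unfolding t by (simp add: sum_subtractf)
      also have "\<dots> = 0" using e by simp
      finally show ?thesis .
    qed
    from indep[OF this] have "c i0 = 0" by blast
    then show "N \<in> {..N1 + n i0}" by (simp add: c_def)
  qed
  then show ?thesis by (rule finite_subset) simp
qed

theorem corollary4p11: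
  fixes u :: "'d::finite \<Rightarrow> int ^ 'd" and X :: "(int ^ 'd) set"
  assumes indep: "\<And>c :: 'd \<Rightarrow> int. (\<Sum>i\<in>UNIV. c i *s u i) = 0 \<Longrightarrow> (\<forall>i. c i = 0)"
    and per: "periodic u X"
  shows "\<not> (\<exists>M. minimal_complement M X)"
proof
  assume "\<exists>M. minimal_complement M X"
  then obtain M where mc: "minimal_complement M X" by blast
  obtain F where F: "finite F" "X \<subseteq> sumset F (period_cone u)"
    using per unfolding periodic_def by blast
  have clo: "\<And>x p. x \<in> X \<Longrightarrow> p \<in> period_cone u \<Longrightarrow> x + p \<in> X"
    using per unfolding periodic_def sumset_def by blast
  from mc have cov: "sumset M X = UNIV" and ne: "M \<noteq> {}"
    unfolding minimal_complement_def is_complement_def by auto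
  obtain m where m: "m \<in> M" using ne by blast
  obtain i0 :: 'd where True by simp
  have cover: "z \<in> sumset (M - {m}) X" for z
  proof -
    define w where "w = z - m"
    have "finite (\<Union>f\<in>F. {N::nat. w - int N *s u i0 \<in> sumset {f} (period_cone u)})"
      using F(1) fin_shift[OF indep] by blast
    then obtain N where N: "N \<notin> (\<Union>f\<in>F. {N::nat. w - int N *s u i0 \<in> sumset {f} (period_cone u)})"
      using infinite_UNIV_nat by (metis ex_new_if_finite)
    have notX: "w - int N *s u i0 \<notin> X"
    proof
      assume "w - int N *s u i0 \<in> X"
      with F(2) obtain f p where "f \<in> F" "p \<in> period_cone u" "w - int N *s u i0 = f + p"
        unfolding sumset_def by blast
      with N show False unfolding sumset_def by blast
    qed
    have "z - int N *s u i0 \<in> sumset M X" using cov by simp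
    then obtain m' x' where mx: "m' \<in> M" "x' \<in> X" "z - int N *s u i0 = m' + x'"
      unfolding sumset_def by blast
    have "m' \<noteq> m"
    proof
      assume "m' = m"
      with mx have "w - int N *s u i0 = x'" by (simp add: w_def algebra_simps)
      with mx notX show False by simp
    qed
    moreover have "x' + int N *s u i0 \<in> X" using clo[OF mx(2) cone_single] .
    moreover have "z = m' + (x' + int N *s u i0)" using mx(3) by (simp add: algebra_simps)
    ultimately show ?thesis using mx(1) unfolding sumset_def by blast
  qed
  have "is_complement (M - {m}) X"
  proof -
    have "sumset (M - {m}) X = UNIV" using cover by auto
    moreover have "M - {m} \<noteq> {}"
    proof
      assume "M - {m} = {}"
      then have "sumset (M - {m}) X = {}" unfolding sumset_def by (simp only: empty_iff) simp
      with cover show False by simp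
    qed
    ultimately show ?thesis unfolding is_complement_def by simp
  qed
  moreover have "M - {m} \<subset> M" using m by blast
  ultimately show False using mc unfolding minimal_complement_def by simp
qed

end
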